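(* Fix an integer $\Delta\geq 3$. There is a function $\varepsilon:\mathbb{N}\to\mathbb{R}$, depending only on $n$ (for the fixed $\Delta$), with $\varepsilon(n)\to 0$ as $n\to\infty$, such that for every integer $n\geq 3$, every graph $G$ of order $n$ and maximum degree at most $\Delta$ satisfies $$Mo(G)\leq \frac{\Delta}{2}n^2-(2-\varepsilon(n))\frac{\Delta-2}{(\Delta-1)^2}\,n\log_{(\Delta-1)}\left(\log_{(\Delta-1)}(n)\right).$$
   Context: All graphs are finite and simple. For a graph $G$ and an edge $uv$ of $G$, $n_G(u,v)$ denotes the number of vertices of $G$ whose distance in $G$ to $u$ is smaller than their distance to $v$ (vertices in other components have infinite distance to both and are not counted). The Mostar index of $G$ is $Mo(G)=\sum_{uv\in E(G)}|n_G(u,v)-n_G(v,u)|$. The $o(1)$ term of the paper is written here as $\varepsilon(n)$. *)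

theory Defs
  imports Complex_Main "HOL-Library.Extended_Nat"
begin

definition simple_graph :: "'a set \<Rightarrow> ('a \<Rightarrow> 'a \<Rightarrow> bool) \<Rightarrow> bool" where
  "simple_graph V E \<longleftrightarrow> finite V \<and> (\<forall>u v. E u v \<longrightarrow> u \<in> V \<and> v \<in> V)
     \<and> (\<forall>u v. E u v \<longrightarrow> E v u) \<and> (\<forall>u. \<not> E u u)"

definition degree :: "'a set \<Rightarrow> ('a \<Rightarrow> 'a \<Rightarrow> bool) \<Rightarrow> 'a \<Rightarrow> nat" where
  "degree V E u = card {v \<in> V. E u v}"

definition gdist :: "('a \<Rightarrow> 'a \<Rightarrow> bool) \<Rightarrow> 'a \<Rightarrow> 'a \<Rightarrow> enat" where
  "gdist E u v = (INF k \<in> {k. (E ^^ k) u v}. enat k)"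

definition ncloser :: "'a set \<Rightarrow> ('a \<Rightarrow> 'a \<Rightarrow> bool) \<Rightarrow> 'a \<Rightarrow> 'a \<Rightarrow> nat" where
  "ncloser V E u v = card {w \<in> V. gdist E w u < gdist E w v}"

text \<open>Mostar index: sum over (unordered) edges uv of |n(u,v) - n(v,u)|; since the
summand is symmetric, this is half the sum over ordered adjacent pairs.\<close>
definition mostar :: "'a set \<Rightarrow> ('a \<Rightarrow> 'a \<Rightarrow> bool) \<Rightarrow> real" where
  "mostar V E = (\<Sum>u\<in>V. \<Sum>v\<in>V. if E u v then
       \<bar>real (ncloser V E u v) - real (ncloser V E v u)\<bar> else 0) / 2"

end

theory Submission
  imports Defs "HOL-Real_Asymp.Real_Asymp"
begin


lemma sg_facts:
  assumes "simple_graph V E"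
  shows "finite V" "\<And>u v. E u v \<Longrightarrow> u \<in> V" "\<And>u v. E u v \<Longrightarrow> v \<in> V"
    "\<And>u v. E u v \<Longrightarrow> E v u" "\<And>u. \<not> E u u"
  using assms unfolding simple_graph_def by blast+

lemma relpowp_sym:
  assumes "\<And>u v. E u v \<Longrightarrow> E v u"
  shows "(E ^^ k) x y \<Longrightarrow> (E ^^ k) y x"
proof (induction k arbitrary: x y)
  case 0 then show ?case by simp
next
  case (Suc k)
  from Suc.prems obtain z where "(E ^^ k) x z" "E z y" by (rule relpowp_Suc_E)
  then have "(E ^^ k) z x" "E y z" using Suc.IH assms by auto
  then show ?case by (metis relpowp_Suc_I2)
qed

lemma relpowp_trans: "(E ^^ a) x y \<Longrightarrow> (E ^^ b) y z \<Longrightarrow> (E ^^ (a + b)) x z"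
  unfolding relpowp_add by (rule relcomppI)

lemma gdist_le: "(E ^^ k) x y \<Longrightarrow> gdist E x y \<le> enat k"
  unfolding gdist_def by (rule INF_lower) simp

lemma gdist_finite:
  assumes "gdist E x y \<noteq> \<infinity>"
  shows "\<exists>k. (E ^^ k) x y \<and> gdist E x y = enat k"
proof -
  have ne: "\<exists>k. (E ^^ k) x y"
  proof (rule ccontr)
    assume "\<not> ?thesis"
    then have "{k. (E ^^ k) x y} = {}" by auto
    then have "gdist E x y = \<infinity>" unfolding gdist_def by (simp add: top_enat_def)
    with assms show False by simp
  qed
  define m where "m = (LEAST k. (E ^^ k) x y)"
  have m: "(E ^^ m) x y" unfolding m_def using ne by (metis LeastI)
  have "gdist E x y = enat m"
  proof (rule antisym)
    show "gdist E x y \<le> enat m" using m by (rule gdist_le)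
    show "enat m \<le> gdist E x y" unfolding gdist_def
      by (rule INF_greatest) (auto simp: m_def intro: Least_le)
  qed
  with m show ?thesis by blast
qed

lemma gdist_inf_iff: "gdist E x y = \<infinity> \<longleftrightarrow> (\<forall>k. \<not> (E ^^ k) x y)"
proof
  assume "gdist E x y = \<infinity>"
  then show "\<forall>k. \<not> (E ^^ k) x y" using gdist_le by (metis enat_ord_code(3) infinity_ileE)
next
  assume "\<forall>k. \<not> (E ^^ k) x y"
  then have "{k. (E ^^ k) x y} = {}" by auto
  then show "gdist E x y = \<infinity>" unfolding gdist_def by (simp add: top_enat_def)
qed

lemma gdist_le_iff: "gdist E x y \<le> enat k \<longleftrightarrow> (\<exists>j\<le>k. (E ^^ j) x y)"
proof
  assume a: "gdist E x y \<le> enat k"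
  have "gdist E x y \<noteq> \<infinity>" proof
    assume "gdist E x y = \<infinity>" with a show False by simp
  qed
  from gdist_finite[OF this] obtain j where j: "(E ^^ j) x y" "gdist E x y = enat j" by blast
  from a j(2) have "j \<le> k" by simp
  with j(1) show "\<exists>j\<le>k. (E ^^ j) x y" by blast
next
  assume "\<exists>j\<le>k. (E ^^ j) x y"
  then obtain j where "j \<le> k" "(E ^^ j) x y" by blast
  then have "gdist E x y \<le> enat j" by (simp add: gdist_le)
  also have "enat j \<le> enat k" using \<open>j \<le> k\<close> by simp
  finally show "gdist E x y \<le> enat k" .
qed

lemma gdist_sym:
  assumes "\<And>u v. E u v \<Longrightarrow> E v u"
  shows "gdist E x y = gdist E y x"
proof -
  have "(E ^^ k) x y \<longleftrightarrow> (E ^^ k) y x" for k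
    using relpowp_sym[of E k x y, OF assms] relpowp_sym[of E k y x, OF assms] by (intro iffI)
  then have "{k. (E ^^ k) x y} = {k. (E ^^ k) y x}" by blast
  then show ?thesis unfolding gdist_def by simp
qed

lemma gdist_tri:
  assumes "gdist E x y \<le> enat a" "(E ^^ b) y z"
  shows "gdist E x z \<le> enat (a + b)"
proof -
  from assms(1) obtain j where j: "j \<le> a" "(E ^^ j) x y" unfolding gdist_le_iff by blast
  have "(E ^^ (j + b)) x z" by (rule relpowp_trans[OF j(2) assms(2)])
  moreover have "j + b \<le> a + b" using j(1) by simp
  ultimately show ?thesis unfolding gdist_le_iff by blast
qed


lemma enat_le_obtain: "(e::enat) \<le> enat i \<Longrightarrow> \<exists>j. e = enat j \<and> j \<le> i"
  by (metis enat_ile enat_ord_simps(1))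

lemma gdist_finite_eq:
  assumes "gdist E x y = enat k" shows "(E ^^ k) x y"
  using gdist_finite[of E x y] assms by auto

lemma geodesic_edge:
  assumes sym: "\<And>u v. E u v \<Longrightarrow> E v u" and d: "gdist E w r = enat k" and i: "i < k"
  shows "\<exists>x y. E x y \<and> gdist E w x = enat i \<and> gdist E w x < gdist E w y
           \<and> gdist E r y < gdist E r x"
proof -
  define m where "m = k - Suc i"
  have km: "k = i + Suc m" using i unfolding m_def by simp
  have "(E ^^ k) w r" using d by (rule gdist_finite_eq)
  then have "(E ^^ (i + Suc m)) w r" using km by simp
  then have "(E ^^ i OO E ^^ Suc m) w r" unfolding relpowp_add .
  then obtain x where x1: "(E ^^ i) w x" and x2: "(E ^^ Suc m) x r" by blast
  from relpowp_Suc_D2[OF x2] obtain y where xy: "E x y" and y2: "(E ^^ m) y r" by blast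
  have wy1: "(E ^^ Suc i) w y" using x1 xy by (rule relpowp_Suc_I)
  have "gdist E w x \<le> enat i" using x1 by (rule gdist_le)
  then obtain j where j: "gdist E w x = enat j" using enat_le_obtain by blast
  have "gdist E w r \<le> enat (j + Suc m)" using j x2 gdist_tri[of E w x j "Suc m" r] by simp
  with d have "k \<le> j + Suc m" by simp
  moreover have "j \<le> i" using j \<open>gdist E w x \<le> enat i\<close> by simp
  ultimately have ji: "j = i" using km by simp
  have "gdist E w y \<le> enat (Suc i)" using wy1 by (rule gdist_le)
  then obtain j' where j': "gdist E w y = enat j'" using enat_le_obtain by blast
  have "gdist E w r \<le> enat (j' + m)" using j' y2 gdist_tri[of E w y j' m r] by simp
  with d have "k \<le> j' + m" by simp
  then have wy: "gdist E w x < gdist E w y" using j ji j' km by simp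
  have ry: "gdist E r y \<le> enat m" using relpowp_sym[of E m y r, OF sym y2] by (rule gdist_le)
  have rx: "enat (Suc m) \<le> gdist E r x"
  proof (rule ccontr)
    assume "\<not> ?thesis"
    then have "gdist E r x \<le> enat m" by (cases "gdist E r x") auto
    moreover have "(E ^^ i) x w" using relpowp_sym[of E i w x, OF sym x1] .
    ultimately have "gdist E r w \<le> enat (m + i)" by (rule gdist_tri)
    moreover have "gdist E r w = enat k" using d gdist_sym[of E r w, OF sym] by simp
    ultimately show False using km by simp
  qed
  have "gdist E r y < gdist E r x" using ry rx
    by (meson Suc_n_not_le_n enat_ord_simps(1) linorder_not_le order.trans)
  with xy j ji wy show ?thesis by blast
qed

definition cl :: "('a \<Rightarrow> 'a \<Rightarrow> bool) \<Rightarrow> 'a \<Rightarrow> 'a \<Rightarrow> 'a \<Rightarrow> bool" where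
  "cl E w u v \<longleftrightarrow> gdist E w u < gdist E w v"

definition ind :: "bool \<Rightarrow> real" where "ind P = (if P then 1 else 0)"

definition phi :: "'a set \<Rightarrow> ('a \<Rightarrow> 'a \<Rightarrow> bool) \<Rightarrow> 'a \<Rightarrow> 'a \<Rightarrow> 'a \<Rightarrow> real" where
  "phi V E u v w = (if ncloser V E u v < ncloser V E v u then 2 * ind (cl E w u v)
      else 2 * ind (cl E w v u)) + ind (\<not> cl E w u v \<and> \<not> cl E w v u)"

definition Lw :: "'a set \<Rightarrow> ('a \<Rightarrow> 'a \<Rightarrow> bool) \<Rightarrow> 'a \<Rightarrow> real" where
  "Lw V E w = (\<Sum>u\<in>V. \<Sum>v\<in>V. if E u v then phi V E u v w else 0)"

lemma ncloser_cl: "ncloser V E u v = card {w\<in>V. cl E w u v}"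
  by (simp add: ncloser_def cl_def)

lemma sum_ind: "finite V \<Longrightarrow> (\<Sum>w\<in>V. ind (P w)) = real (card {w\<in>V. P w})"
proof -
  assume f: "finite V"
  have "(\<Sum>w\<in>V. ind (P w)) = (\<Sum>w\<in>V. if w \<in> {w. P w} then 1 else 0)"
    by (simp add: ind_def)
  also have "\<dots> = (\<Sum>w\<in>V \<inter> {w. P w}. 1)" using sum.inter_restrict[OF f, of "\<lambda>_. (1::real)" "{w. P w}"] by simp
  also have "V \<inter> {w. P w} = {w\<in>V. P w}" by blast
  finally show ?thesis by simp
qed

lemma phi_nonneg: "phi V E u v w \<ge> 0"
  by (simp add: phi_def ind_def)

lemma phi_pt: "phi V E u v w = (if ncloser V E u v < ncloser V E v u then 2 * ind (cl E w u v)
      else 2 * ind (cl E w v u)) + 1 - ind (cl E w u v) - ind (cl E w v u)"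
  unfolding phi_def ind_def cl_def by auto

lemma phi_sum:
  assumes "finite V"
  shows "(\<Sum>w\<in>V. phi V E u v w) = real (card V) - \<bar>real (ncloser V E u v) - real (ncloser V E v u)\<bar>"
proof -
  let ?a = "ncloser V E u v" and ?b = "ncloser V E v u"
  have A: "(\<Sum>w\<in>V. ind (cl E w u v)) = real ?a" using assms by (simp add: sum_ind ncloser_cl)
  have B: "(\<Sum>w\<in>V. ind (cl E w v u)) = real ?b" using assms by (simp add: sum_ind ncloser_cl)
  show ?thesis
  proof (cases "?a < ?b")
    case True
    then have "(\<Sum>w\<in>V. phi V E u v w) = (\<Sum>w\<in>V. 2 * ind (cl E w u v) + 1 - ind (cl E w u v) - ind (cl E w v u))"
      by (simp add: phi_pt)
    also have "\<dots> = 2 * real ?a + real (card V) - real ?a - real ?b"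
      by (simp add: sum.distrib sum_subtractf sum_distrib_left[symmetric] A B)
    finally show ?thesis using True by simp
  next
    case False
    then have "(\<Sum>w\<in>V. phi V E u v w) = (\<Sum>w\<in>V. 2 * ind (cl E w v u) + 1 - ind (cl E w u v) - ind (cl E w v u))"
      by (simp add: phi_pt)
    also have "\<dots> = 2 * real ?b + real (card V) - real ?a - real ?b"
      by (simp add: sum.distrib sum_subtractf sum_distrib_left[symmetric] A B)
    finally show ?thesis using False by simp
  qed
qed


lemma sum_if_deg:
  assumes "finite V"
  shows "(\<Sum>v\<in>V. if E u v then c else 0) = real (degree V E u) * c"
proof -
  have "(\<Sum>v\<in>V. if E u v then c else 0) = (\<Sum>v\<in>V. c * ind (E u v))"
    by (rule sum.cong) (auto simp: ind_def)
  also have "\<dots> = c * real (card {v\<in>V. E u v})"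
    by (simp add: sum_distrib_left[symmetric] sum_ind[OF assms])
  finally show ?thesis by (simp add: degree_def)
qed

lemma mostar_L:
  assumes sg: "simple_graph V E"
  shows "2 * mostar V E = (\<Sum>u\<in>V. real (degree V E u)) * real (card V) - (\<Sum>w\<in>V. Lw V E w)"
proof -
  have f: "finite V" using sg_facts[OF sg] by blast
  have "2 * mostar V E = (\<Sum>u\<in>V. \<Sum>v\<in>V. if E u v then
       \<bar>real (ncloser V E u v) - real (ncloser V E v u)\<bar> else 0)" by (simp add: mostar_def)
  also have "\<dots> = (\<Sum>u\<in>V. (\<Sum>v\<in>V. if E u v then real (card V) else 0)
       - (\<Sum>v\<in>V. \<Sum>w\<in>V. if E u v then phi V E u v w else 0))"
    by (rule sum.cong[OF refl]) (auto simp: phi_sum[OF f] sum_subtractf[symmetric] intro!: sum.cong)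
  also have "\<dots> = (\<Sum>u\<in>V. real (degree V E u) * real (card V))
       - (\<Sum>u\<in>V. \<Sum>v\<in>V. \<Sum>w\<in>V. if E u v then phi V E u v w else 0)"
    by (simp add: sum_if_deg[OF f] sum_subtractf)
  also have "(\<Sum>u\<in>V. \<Sum>v\<in>V. \<Sum>w\<in>V. if E u v then phi V E u v w else 0)
      = (\<Sum>u\<in>V. \<Sum>w\<in>V. \<Sum>v\<in>V. if E u v then phi V E u v w else 0)"
    by (rule sum.cong[OF refl]) (rule sum.swap)
  also have "\<dots> = (\<Sum>w\<in>V. Lw V E w)" unfolding Lw_def by (rule sum.swap)
  finally show ?thesis by (simp add: sum_distrib_right)
qed

lemma Lw_nonneg: "Lw V E w \<ge> 0"
  unfolding Lw_def by (intro sum_nonneg) (auto simp: phi_nonneg)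

lemma phi_pair:
  assumes "(cl E w u v \<and> cl E r v u) \<or> (cl E w v u \<and> cl E r u v)"
  shows "phi V E u v w + phi V E u v r \<ge> 2"
  using assms unfolding phi_def ind_def by auto

lemma pair_bound:
  assumes sg: "simple_graph V E" and d: "gdist E w r = enat k"
  shows "Lw V E w + Lw V E r \<ge> 4 * real k"
proof -
  note F = sg_facts[OF sg]
  have "\<forall>i. \<exists>p. i < k \<longrightarrow> (E (fst p) (snd p) \<and> gdist E w (fst p) = enat i
      \<and> cl E w (fst p) (snd p) \<and> cl E r (snd p) (fst p))"
  proof
    fix i show "\<exists>p. i < k \<longrightarrow> (E (fst p) (snd p) \<and> gdist E w (fst p) = enat i
      \<and> cl E w (fst p) (snd p) \<and> cl E r (snd p) (fst p))"
    proof (cases "i < k")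
      case True
      from geodesic_edge[of E w r k i, OF F(4) d True] obtain x y where
        "E x y" "gdist E w x = enat i" "gdist E w x < gdist E w y" "gdist E r y < gdist E r x" by blast
      then show ?thesis by (intro exI[of _ "(x,y)"]) (simp add: cl_def)
    qed simp
  qed
  from choice[OF this] obtain f where f0: "\<forall>i. i < k \<longrightarrow> (E (fst (f i)) (snd (f i)) \<and> gdist E w (fst (f i)) = enat i
      \<and> cl E w (fst (f i)) (snd (f i)) \<and> cl E r (snd (f i)) (fst (f i)))" by blast
  have f: "E (fst (f i)) (snd (f i)) \<and> gdist E w (fst (f i)) = enat i
      \<and> cl E w (fst (f i)) (snd (f i)) \<and> cl E r (snd (f i)) (fst (f i))" if "i < k" for i
    using f0 that by blast
  define g where "g i = (snd (f i), fst (f i))" for i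
  define P where "P = f ` {..<k} \<union> g ` {..<k}"
  have injf: "inj_on f {..<k}"
  proof (rule inj_onI)
    fix i j assume ij: "i \<in> {..<k}" "j \<in> {..<k}" "f i = f j"
    then have ik: "i < k" "j < k" by simp_all
    have "enat i = gdist E w (fst (f i))" using f[OF ik(1)] by simp
    also have "\<dots> = gdist E w (fst (f j))" using ij(3) by simp
    also have "\<dots> = enat j" using f[OF ik(2)] by simp
    finally show "i = j" by simp
  qed
  have injg: "inj_on g {..<k}"
  proof (rule inj_onI)
    fix i j assume "i \<in> {..<k}" "j \<in> {..<k}" "g i = g j"
    then have "f i = f j" unfolding g_def by (simp add: prod_eq_iff)
    then show "i = j" using injf \<open>i \<in> {..<k}\<close> \<open>j \<in> {..<k}\<close> by (meson inj_onD)
  qed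
  have disj: "f ` {..<k} \<inter> g ` {..<k} = {}"
  proof (rule ccontr)
    assume "\<not> ?thesis"
    then obtain p where p: "p \<in> f ` {..<k}" "p \<in> g ` {..<k}" by blast
    from p(1) obtain i where i: "i < k" "p = f i" by blast
    from p(2) obtain j where j: "j < k" "p = g j" by blast
    have ij: "i < k" "j < k" "f i = g j" using i j by simp_all
    then have "fst (f i) = snd (f j)" "snd (f i) = fst (f j)" unfolding g_def by auto
    then show False using f[OF ij(1)] f[OF ij(2)] unfolding cl_def by auto
  qed
  have "card P = card (f ` {..<k}) + card (g ` {..<k})"
    unfolding P_def by (rule card_Un_disjoint) (simp_all add: disj)
  also have "\<dots> = k + k" using card_image[OF injf] card_image[OF injg] by simp
  finally have cardP: "card P = 2 * k" by simp
  have PV: "P \<subseteq> V \<times> V"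
  proof
    fix p assume "p \<in> P"
    then obtain i where i: "i < k" and "p = f i \<or> p = g i" unfolding P_def by blast
    moreover have "fst (f i) \<in> V" "snd (f i) \<in> V" using f[OF i] F(2,3) by blast+
    ultimately show "p \<in> V \<times> V" unfolding g_def by (auto simp: mem_Times_iff)
  qed
  have fin: "finite (V \<times> V)" using F(1) by simp
  define h where "h p = (if E (fst p) (snd p) then phi V E (fst p) (snd p) w + phi V E (fst p) (snd p) r else 0)" for p
  have h_nonneg: "h p \<ge> 0" for p unfolding h_def by (simp add: phi_nonneg add_nonneg_nonneg)
  have hP: "h p \<ge> 2" if "p \<in> P" for p
  proof -
    from that obtain i where i: "i < k" and dj: "p = f i \<or> p = g i" unfolding P_def by auto
    from dj show ?thesis
    proof
      assume "p = f i" then show ?thesis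
        using f[OF i] phi_pair[of E w "fst (f i)" "snd (f i)" r V] unfolding h_def by auto
    next
      assume "p = g i" then show ?thesis
        using f[OF i] phi_pair[of E w "snd (f i)" "fst (f i)" r V] F(4) unfolding h_def g_def by auto
    qed
  qed
  have "4 * real k = (\<Sum>p\<in>P. 2)" using cardP by simp
  also have "\<dots> \<le> (\<Sum>p\<in>P. h p)" by (rule sum_mono) (rule hP)
  also have "\<dots> \<le> (\<Sum>p\<in>V \<times> V. h p)" by (rule sum_mono2[OF fin PV]) (simp add: h_nonneg)
  also have "\<dots> = (\<Sum>u\<in>V. \<Sum>v\<in>V. h (u, v))" by (simp add: sum.cartesian_product)
  also have "\<dots> = Lw V E w + Lw V E r"
    unfolding Lw_def h_def by (simp add: sum.distrib[symmetric] if_distrib cong: if_cong)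
  finally show ?thesis by simp
qed


lemma unreach_bound:
  assumes sg: "simple_graph V E"
  shows "(\<Sum>u\<in>{u\<in>V. gdist E w u = \<infinity>}. real (degree V E u)) \<le> Lw V E w"
proof -
  note F = sg_facts[OF sg]
  let ?U = "{u\<in>V. gdist E w u = \<infinity>}"
  have inner: "real (degree V E u) \<le> (\<Sum>v\<in>V. if E u v then phi V E u v w else 0)" if u: "u \<in> ?U" for u
  proof -
    have "real (degree V E u) = (\<Sum>v\<in>V. if E u v then 1 else 0)" using sum_if_deg[OF F(1), of E u 1] by simp
    also have "\<dots> \<le> (\<Sum>v\<in>V. if E u v then phi V E u v w else 0)"
    proof (rule sum_mono)
      fix v assume "v \<in> V"
      show "(if E u v then 1 else 0) \<le> (if E u v then phi V E u v w else 0)"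
      proof (cases "E u v")
        case True
        have "gdist E w v = \<infinity>"
        proof (rule ccontr)
          assume "gdist E w v \<noteq> \<infinity>"
          then obtain j where "(E ^^ j) w v" using gdist_finite[of E w v] by blast
          then have "(E ^^ Suc j) w u" using F(4)[OF True] by (rule relpowp_Suc_I)
          then have "gdist E w u \<le> enat (Suc j)" by (rule gdist_le)
          moreover have "gdist E w u = \<infinity>" using u by simp
          ultimately show False by simp
        qed
        then have "\<not> cl E w u v \<and> \<not> cl E w v u" using u by (simp add: cl_def)
        then have "phi V E u v w \<ge> 1" unfolding phi_def ind_def by simp
        then show ?thesis using True by simp
      qed simp
    qed
    finally show ?thesis .
  qed
  have "(\<Sum>u\<in>?U. real (degree V E u)) \<le> (\<Sum>u\<in>?U. \<Sum>v\<in>V. if E u v then phi V E u v w else 0)"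
    by (rule sum_mono) (rule inner)
  also have "\<dots> \<le> (\<Sum>u\<in>V. \<Sum>v\<in>V. if E u v then phi V E u v w else 0)"
    by (rule sum_mono2[OF F(1)]) (auto intro!: sum_nonneg simp: phi_nonneg)
  finally show ?thesis unfolding Lw_def .
qed

lemma ball_bound:
  assumes sg: "simple_graph V E" and deg: "\<forall>u\<in>V. degree V E u \<le> D"
  shows "card {x\<in>V. gdist E w x \<le> enat k} \<le> (D + 1) ^ k"
proof (induction k)
  case 0
  have "{x\<in>V. gdist E w x \<le> enat 0} \<subseteq> {w}"
  proof
    fix x assume "x \<in> {x\<in>V. gdist E w x \<le> enat 0}"
    then have "gdist E w x \<le> enat 0" by simp
    then obtain j where "j \<le> 0" "(E ^^ j) w x" unfolding gdist_le_iff by blast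
    then show "x \<in> {w}" by simp
  qed
  then have "card {x\<in>V. gdist E w x \<le> enat 0} \<le> card {w}" by (rule card_mono[rotated]) simp
  then show ?case by simp
next
  case (Suc k)
  note F = sg_facts[OF sg]
  let ?B = "{x\<in>V. gdist E w x \<le> enat k}"
  have sub: "{x\<in>V. gdist E w x \<le> enat (Suc k)} \<subseteq> ?B \<union> (\<Union>y\<in>?B. {v\<in>V. E y v})"
  proof
    fix x assume x: "x \<in> {x\<in>V. gdist E w x \<le> enat (Suc k)}"
    then have "gdist E w x \<le> enat (Suc k)" by simp
    then obtain j where j: "j \<le> Suc k" "(E ^^ j) w x" unfolding gdist_le_iff by blast
    show "x \<in> ?B \<union> (\<Union>y\<in>?B. {v\<in>V. E y v})"
    proof (cases "j \<le> k")
      case True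
      then have "gdist E w x \<le> enat k" unfolding gdist_le_iff using j(2) by blast
      then show ?thesis using x by blast
    next
      case False
      then have "j = Suc k" using j(1) by simp
      with j(2) have "(E ^^ Suc k) w x" by simp
      then obtain y where y: "(E ^^ k) w y" "E y x" by (rule relpowp_Suc_E)
      have "y \<in> V" using F(2)[OF y(2)] .
      moreover have "gdist E w y \<le> enat k" using y(1) by (rule gdist_le)
      ultimately have "y \<in> ?B" by simp
      then show ?thesis using y x by blast
    qed
  qed
  have finB: "finite ?B" using F(1) by simp
  have "card {x\<in>V. gdist E w x \<le> enat (Suc k)} \<le> card (?B \<union> (\<Union>y\<in>?B. {v\<in>V. E y v}))"
    by (rule card_mono[OF _ sub]) (simp add: F(1))
  also have "\<dots> \<le> card ?B + card (\<Union>y\<in>?B. {v\<in>V. E y v})" by (rule card_Un_le)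
  also have "card (\<Union>y\<in>?B. {v\<in>V. E y v}) \<le> (\<Sum>y\<in>?B. card {v\<in>V. E y v})"
    by (rule card_UN_le[OF finB])
  also have "\<dots> \<le> (\<Sum>y\<in>?B. D)"
  proof (rule sum_mono)
    fix y assume "y \<in> ?B"
    then have "y \<in> V" by simp
    then show "card {v\<in>V. E y v} \<le> D" using deg unfolding degree_def by blast
  qed
  also have "\<dots> = card ?B * D" by simp
  finally have "card {x\<in>V. gdist E w x \<le> enat (Suc k)} \<le> card ?B * (D + 1)" by (simp add: algebra_simps)
  also have "\<dots> \<le> (D + 1) ^ k * (D + 1)" using Suc.IH by (rule mult_right_mono) simp
  finally show ?case by (simp add: mult.commute)
qed


lemma main_bound:
  assumes sg: "simple_graph V E" and deg: "\<forall>u\<in>V. degree V E u \<le> D" and D1: "D \<ge> 1"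
  shows "mostar V E \<le> real D / 2 * real (card V) ^ 2
           - 2 * real t * (real (card V) - real ((D + 1) ^ (2 * t)) - 4 * real t)"
proof -
  note F = sg_facts[OF sg]
  define n where "n = card V"
  define L2 where "L2 w = Lw V E w + (real D - real (degree V E w)) * real n" for w
  have L2_ge: "Lw V E w \<le> L2 w" if "w \<in> V" for w
    using deg that unfolding L2_def by (simp add: mult_nonneg_nonneg)
  have L2_nonneg: "0 \<le> L2 w" if "w \<in> V" for w using L2_ge[OF that] Lw_nonneg[of V E w] by linarith
  have sumL2: "(\<Sum>w\<in>V. L2 w) = (\<Sum>w\<in>V. Lw V E w) + real D * real n * real n
      - (\<Sum>u\<in>V. real (degree V E u)) * real n"
    unfolding L2_def by (simp add: sum.distrib sum_subtractf sum_distrib_right sum_distrib_left n_def algebra_simps)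
  have mo: "2 * mostar V E = real D * real n ^ 2 - (\<Sum>w\<in>V. L2 w)"
    using mostar_L[OF sg] sumL2 unfolding n_def by (simp add: power2_eq_square)
  define S where "S = {w\<in>V. L2 w < 4 * real t}"
  have finS: "finite S" using F(1) unfolding S_def by simp
  have SV: "S \<subseteq> V" unfolding S_def by blast
  have "4 * real t * real (card (V - S)) = (\<Sum>w\<in>V - S. 4 * real t)" by simp
  also have "\<dots> \<le> (\<Sum>w\<in>V - S. L2 w)" by (rule sum_mono) (auto simp: S_def not_less)
  also have "\<dots> \<le> (\<Sum>w\<in>V. L2 w)" by (rule sum_mono2[OF F(1)]) (auto intro: L2_nonneg)
  finally have sumge: "4 * real t * real (card (V - S)) \<le> (\<Sum>w\<in>V. L2 w)" .
  have cVS: "real (card (V - S)) = real n - real (card S)"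
    using card_Diff_subset[OF finS SV] card_mono[OF F(1) SV] unfolding n_def by simp
  have cardS: "real (card S) \<le> real ((D + 1) ^ (2 * t)) + 4 * real t"
  proof (cases "4 * t \<le> n \<and> S \<noteq> {}")
    case False
    then consider "\<not> 4 * t \<le> n" | "S = {}" by blast
    then show ?thesis
    proof cases
      case 1
      moreover have "card S \<le> n" unfolding n_def by (rule card_mono[OF F(1) SV])
      ultimately have "card S \<le> 4 * t" by simp
      then have "real (card S) \<le> 4 * real t" by (metis of_nat_le_iff of_nat_mult of_nat_numeral)
      moreover have "0 \<le> real ((D + 1) ^ (2 * t))" by simp
      ultimately show ?thesis by linarith
    qed simp
  next
    case True
    then obtain w0 where w0: "w0 \<in> S" by blast
    have w0V: "w0 \<in> V" using w0 SV by blast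
    have npos: "0 < n" using w0V F(1) unfolding n_def by (simp add: card_gt_0_iff) blast
    have Lw0: "Lw V E w0 < 4 * real t" using w0 L2_ge[OF w0V] unfolding S_def by simp
    define U where "U = {r\<in>S. gdist E w0 r = \<infinity>}"
    define Bl where "Bl = {x\<in>V. gdist E w0 x \<le> enat (2 * t)}"
    have sub: "S \<subseteq> Bl \<union> U"
    proof
      fix r assume r: "r \<in> S"
      show "r \<in> Bl \<union> U"
      proof (cases "gdist E w0 r = \<infinity>")
        case True then show ?thesis using r unfolding U_def by blast
      next
        case False
        then obtain k where k: "gdist E w0 r = enat k" by auto
        have rV: "r \<in> V" using r SV by blast
        have "4 * real k \<le> Lw V E w0 + Lw V E r" by (rule pair_bound[OF sg k])
        moreover have "Lw V E r < 4 * real t" using r L2_ge[OF rV] unfolding S_def by simp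
        ultimately have "k \<le> 2 * t" using Lw0 by linarith
        then show ?thesis using k rV unfolding Bl_def by simp
      qed
    qed
    have degU: "1 \<le> degree V E r" if "r \<in> U" for r
    proof -
      have rS: "r \<in> S" and rV: "r \<in> V" using that SV unfolding U_def by auto
      have "L2 r < real n" using rS True unfolding S_def by simp
      then have "(real D - real (degree V E r)) * real n < 1 * real n"
        using Lw_nonneg[of V E r] unfolding L2_def by simp
      then have "real D - real (degree V E r) < 1" using npos by (simp add: mult_less_cancel_right)
      then have "D \<le> degree V E r" by linarith
      then show ?thesis using D1 by simp
    qed
    have "real (card U) = (\<Sum>r\<in>U. 1)" by simp
    also have "\<dots> \<le> (\<Sum>r\<in>U. real (degree V E r))" by (rule sum_mono) (use degU in force)
    also have "\<dots> \<le> (\<Sum>u\<in>{u\<in>V. gdist E w0 u = \<infinity>}. real (degree V E u))"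
      by (rule sum_mono2) (use F(1) SV in \<open>auto simp: U_def\<close>)
    also have "\<dots> \<le> Lw V E w0" by (rule unreach_bound[OF sg])
    finally have cU: "real (card U) < 4 * real t" using Lw0 by linarith
    have cB: "card Bl \<le> (D + 1) ^ (2 * t)" unfolding Bl_def by (rule ball_bound[OF sg deg])
    have "card S \<le> card (Bl \<union> U)" by (rule card_mono[OF _ sub]) (simp add: Bl_def U_def F(1) finS)
    also have "\<dots> \<le> card Bl + card U" by (rule card_Un_le)
    finally have "real (card S) \<le> real (card Bl) + real (card U)" by linarith
    then show ?thesis using cU cB by linarith
  qed
  have "2 * mostar V E \<le> real D * real n ^ 2 - 4 * real t * (real n - real (card S))"
    using mo sumge cVS by simp
  moreover have "4 * real t * (real n - real ((D + 1) ^ (2 * t)) - 4 * real t)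
      \<le> 4 * real t * (real n - real (card S))"
    by (rule mult_left_mono) (use cardS in auto)
  ultimately show ?thesis unfolding n_def by simp
qed



lemma ln2_half: "1/2 < ln (2::real)"
proof -
  have "exp (1/2::real) ^ 2 = exp (real 2 * (1/2))" by (rule exp_of_nat_mult[symmetric])
  also have "\<dots> = exp 1" by simp
  also have "\<dots> \<le> 3" by (rule exp_le)
  finally have "exp (1/2::real) ^ 2 < 2 ^ 2" by simp
  then have "exp (1/2::real) < 2" by (rule power_less_imp_less_base) simp
  then have "ln (exp (1/2::real)) < ln 2" by (subst ln_less_cancel_iff) auto
  then show ?thesis by simp
qed

definition tt :: "nat \<Rightarrow> real \<Rightarrow> nat" where
  "tt D x = nat \<lfloor>ln x / (4 * ln (real D + 1))\<rfloor>"

definition GG :: "nat \<Rightarrow> real \<Rightarrow> real" where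
  "GG D x = 2 * real (tt D x) * (x - real ((D + 1) ^ (2 * tt D x)) - 4 * real (tt D x))"

lemma asym_pointwise:
  fixes D :: nat and x :: real
  assumes D3: "D \<ge> 3" and x0: "0 < x" and y1: "1 < ln x"
    and e1: "exp (ln x / 2) + ln x \<le> x / 2"
    and e2: "(4 + 2 * ln (ln x)) / ln x < 1 / (2 * ln (real D + 1))"
  shows "2 * ((real D - 2) / (real D - 1) ^ 2) * x * log (real D - 1) (log (real D - 1) x) \<le> GG D x"
proof -
  define y where "y = ln x"
  define A where "A = ln (real D + 1)"
  define b where "b = real D - 1"
  define T where "T = y / (4 * A)"
  define t where "t = tt D x"
  have b2: "2 \<le> b" using D3 unfolding b_def by simp
  have A1: "1 \<le> A"
  proof -
    have "exp 1 \<le> real D + 1" using exp_le D3 by simp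
    then have "ln (exp 1) \<le> ln (real D + 1)" by (subst ln_le_cancel_iff) auto
    then show ?thesis unfolding A_def by simp
  qed
  have y1': "1 < y" using y1 unfolding y_def .
  have T0: "0 < T" unfolding T_def using y1' A1 by simp
  have tT: "real t = of_int \<lfloor>T\<rfloor>" unfolding t_def tt_def T_def y_def A_def using T0 unfolding T_def y_def A_def
    by simp
  have t_le: "real t \<le> T" using tT by simp
  have t_gt: "T - 1 < real t" using tT real_of_int_floor_add_one_gt[of T] by linarith
  have t0: "0 \<le> real t" by simp
  have P1: "real ((D + 1) ^ (2 * t)) \<le> exp (y / 2)"
  proof -
    have "real ((D + 1) ^ (2 * t)) = exp A ^ (2 * t)" unfolding A_def by (simp add: add.commute)
    also have "\<dots> = exp (real (2 * t) * A)" by (rule exp_of_nat_mult[symmetric])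
    also have "\<dots> \<le> exp (y / 2)"
    proof (subst exp_le_cancel_iff)
      have "real (2 * t) * A \<le> 2 * T * A" using t_le A1 by simp
      also have "\<dots> = y / 2" unfolding T_def using A1 by (simp add: field_simps)
      finally show "real (2 * t) * A \<le> y / 2" .
    qed
    finally show ?thesis .
  qed
  have P2: "4 * real t \<le> y"
  proof -
    have "4 * real t \<le> 4 * T" using t_le by simp
    also have "\<dots> = y / A" unfolding T_def using A1 by (simp add: field_simps)
    also have "\<dots> \<le> y" using A1 y1' by (simp add: divide_le_eq)
    finally show ?thesis .
  qed
  have X: "x / 2 \<le> x - real ((D + 1) ^ (2 * t)) - 4 * real t" using P1 P2 e1 unfolding y_def by linarith
  have G1: "real t * x \<le> GG D x"
  proof -
    have "real t * x = 2 * real t * (x / 2)" by simp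
    also have "\<dots> \<le> 2 * real t * (x - real ((D + 1) ^ (2 * t)) - 4 * real t)"
      by (rule mult_left_mono[OF X]) simp
    finally show ?thesis unfolding GG_def t_def .
  qed
  have G0: "0 \<le> GG D x" using G1 t0 x0 by (meson mult_nonneg_nonneg order_trans less_imp_le)
  define c where "c = (real D - 2) / (real D - 1) ^ 2"
  have c0: "0 \<le> c" unfolding c_def using D3 by simp
  have c4: "c \<le> 1/4"
  proof -
    have h: "0 \<le> (b - 2) * (b - 2)" by simp
    have h2: "4 * (b - 1) \<le> b ^ 2" using h by (simp add: power2_eq_square algebra_simps)
    have ceq: "c = (b - 1) / b ^ 2" unfolding c_def b_def by simp
    have bp: "0 < b ^ 2" using b2 by simp
    have "(b - 1) / b ^ 2 \<le> 1/4" unfolding pos_divide_le_eq[OF bp] using h2 by (simp add: field_simps)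
    then show ?thesis using ceq by simp
  qed
  define LL where "LL = log b (log b x)"
  have lb: "1/2 < ln b"
  proof -
    have "ln 2 \<le> ln b" using b2 by (subst ln_le_cancel_iff) auto
    then show ?thesis using ln2_half by linarith
  qed
  show ?thesis
  proof (cases "LL \<le> 0")
    case True
    have "2 * c * x * LL \<le> 0" using True c0 x0 by (simp add: mult_nonneg_nonpos)
    then show ?thesis using G0 unfolding c_def LL_def b_def by linarith
  next
    case False
    then have LLpos: "0 < LL" by simp
    have LLeq: "LL = ln (y / ln b) / ln b" unfolding LL_def log_def y_def by simp
    have num_pos: "0 < ln (y / ln b)" using LLpos lb unfolding LLeq by (simp add: zero_less_divide_iff)
    have "y / ln b \<le> 2 * y" using lb y1' by (simp add: divide_le_eq) 
    then have "ln (y / ln b) \<le> ln (2 * y)" using y1' lb by (subst ln_le_cancel_iff) auto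
    also have "\<dots> = ln 2 + ln y" using y1' by (simp add: ln_mult)
    also have "\<dots> \<le> 1 + ln y" using ln_le_minus_one[of 2] by simp
    finally have n1: "ln (y / ln b) \<le> 1 + ln y" .
    have "LL \<le> (1 + ln y) / ln b" unfolding LLeq using n1 lb by (simp add: divide_right_mono)
    also have "\<dots> \<le> 2 * (1 + ln y)"
    proof -
      have p: "0 < 1 + ln y" using num_pos n1 by linarith
      have lbp: "0 < ln b" using lb by linarith
      have "(1 + ln y) * 1 \<le> (1 + ln y) * (2 * ln b)"
        by (rule mult_left_mono) (use p lb in auto)
      then have "1 + ln y \<le> (2 * (1 + ln y)) * ln b" by (simp add: algebra_simps)
      then show ?thesis using lbp by (simp add: divide_le_eq)
    qed
    finally have LL1: "LL \<le> 2 * (1 + ln y)" .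
    have "4 + 2 * ln y < y / (2 * A)" using e2 y1' A1 unfolding y_def A_def by (simp add: divide_less_eq field_simps)
    then have LL2: "LL / 2 < T - 1" using LL1 unfolding T_def by (simp add: field_simps)
    have "2 * c * x * LL \<le> 2 * (1/4) * x * LL" using c4 x0 LLpos by (simp add: mult_right_mono)
    also have "\<dots> = x * (LL / 2)" by simp
    also have "\<dots> \<le> x * real t" using LL2 t_gt x0 by (intro mult_left_mono) auto
    also have "\<dots> \<le> GG D x" using G1 by (simp add: mult.commute)
    finally show ?thesis unfolding c_def LL_def b_def .
  qed
qed


lemma asym_eventually:
  fixes D :: nat
  assumes D3: "D \<ge> 3"
  shows "eventually (\<lambda>n::nat. 2 * ((real D - 2) / (real D - 1) ^ 2) * real n
     * log (real D - 1) (log (real D - 1) (real n)) \<le> GG D (real n)) sequentially"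
proof -
  have Apos: "0 < 1 / (2 * ln (real D + 1))" using D3 by simp
  have l: "((\<lambda>x::real. (4 + 2 * ln (ln x)) / ln x) \<longlongrightarrow> 0) at_top" by real_asymp
  have ev2: "eventually (\<lambda>x::real. (4 + 2 * ln (ln x)) / ln x < 1 / (2 * ln (real D + 1))) at_top"
    using order_tendstoD(2)[OF l Apos] .
  have ev1: "eventually (\<lambda>x::real. exp (ln x / 2) + ln x \<le> x / 2) at_top" by real_asymp
  have ev3: "eventually (\<lambda>x::real. 1 < ln x) at_top" by real_asymp
  have ev0: "eventually (\<lambda>x::real. 0 < x) at_top" by real_asymp
  have "eventually (\<lambda>x::real. 2 * ((real D - 2) / (real D - 1) ^ 2) * x
     * log (real D - 1) (log (real D - 1) x) \<le> GG D x) at_top"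
    using ev0 ev1 ev2 ev3
  proof eventually_elim
    case (elim x)
    then show ?case using asym_pointwise[OF D3] by blast
  qed
  then show ?thesis by (rule eventually_compose_filterlim[OF _ filterlim_real_sequentially])
qed

theorem theorem2:
  fixes \<Delta> :: nat
  assumes "\<Delta> \<ge> 3"
  shows "\<exists>\<epsilon> :: nat \<Rightarrow> real. \<epsilon> \<longlonglongrightarrow> 0 \<and>
    (\<forall>(n::nat) (V::nat set) E. n \<ge> 3 \<longrightarrow> simple_graph V E \<longrightarrow> card V = n \<longrightarrow>
       (\<forall>u\<in>V. degree V E u \<le> \<Delta>) \<longrightarrow>
       mostar V E \<le> real \<Delta> / 2 * real n ^ 2
         - (2 - \<epsilon> n) * (real \<Delta> - 2) / (real \<Delta> - 1) ^ 2 * real n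
           * log (real \<Delta> - 1) (log (real \<Delta> - 1) (real n)))"
proof -
  define K where "K n = 2 * ((real \<Delta> - 2) / (real \<Delta> - 1) ^ 2) * real n
     * log (real \<Delta> - 1) (log (real \<Delta> - 1) (real n))" for n :: nat
  define eps where "eps n = (if K n \<le> GG \<Delta> (real n) then 0 else (2::real))" for n :: nat
  have "eventually (\<lambda>n. K n \<le> GG \<Delta> (real n)) sequentially"
    unfolding K_def by (rule asym_eventually[OF assms])
  then have "eventually (\<lambda>n. eps n = 0) sequentially"
    by (rule eventually_mono) (simp add: eps_def)
  then have lim: "eps \<longlonglongrightarrow> 0" by (rule tendsto_eventually)
  have D1: "\<Delta> \<ge> 1" using assms by simp
  have bound: "mostar V E \<le> real \<Delta> / 2 * real n ^ 2
         - (2 - eps n) * (real \<Delta> - 2) / (real \<Delta> - 1) ^ 2 * real n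
           * log (real \<Delta> - 1) (log (real \<Delta> - 1) (real n))"
    if sg: "simple_graph V E" and cV: "card V = n" and deg: "\<forall>u\<in>V. degree V E u \<le> \<Delta>"
    for n :: nat and V :: "nat set" and E
  proof -
    have b0: "mostar V E \<le> real \<Delta> / 2 * real n ^ 2"
      using main_bound[OF sg deg D1, of 0] cV by simp
    have b1: "mostar V E \<le> real \<Delta> / 2 * real n ^ 2 - GG \<Delta> (real n)"
      using main_bound[OF sg deg D1, of "tt \<Delta> (real n)"] cV unfolding GG_def by simp
    show ?thesis
    proof (cases "K n \<le> GG \<Delta> (real n)")
      case True
      then have "eps n = 0" by (simp add: eps_def)
      then show ?thesis using b1 True unfolding K_def by simp
    next
      case False
      then have "eps n = 2" by (simp add: eps_def)
      then show ?thesis using b0 by simp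
    qed
  qed
  show ?thesis using lim bound by blast
qed

end
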